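(* The set of singular points of the singularity variety $V=0$ in $\mathbb{R}^{12}$ remains invariant under affine motions: for every invertible $2\times2$ real matrix $\mathbf{A}$ and every $\mathbf{a}\in\mathbb{R}^2$, the map $(\mathbf{k}'_1,\dots,\mathbf{k}'_6)\mapsto(\mathbf{A}\mathbf{k}'_1+\mathbf{a},\dots,\mathbf{A}\mathbf{k}'_6+\mathbf{a})$ maps singular points of $V=0$ to singular points of $V=0$ (and regular points to regular points).
   Context: A configuration is $K'=(\mathbf{k}'_1,\dots,\mathbf{k}'_6)$ with $\mathbf{k}'_i=(c_i,d_i)^T\in\mathbb{R}^2$, viewed as a point of $\mathbb{R}^{12}$. The singularity polynomial is $V(K')=\det\mathbf{V}(K')$, where $\mathbf{V}(K')$ is the $3\times3$ matrix whose $i$-th column ($i=1,2,3$) consists of the two coordinates of $\mathbf{k}'_{i+3}-\mathbf{k}'_i$ followed by the entry $\det(\mathbf{k}'_i,\mathbf{k}'_{i+3}-\mathbf{k}'_i)$ (the $2\times2$ determinant of the two column vectors). A singular point of the hypersurface $V=0$ is a point of $\mathbb{R}^{12}$ where $V$ and all its partial derivatives with respect to $c_1,\dots,c_6,d_1,\dots,d_6$ vanish. *)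

theory Defs
  imports "HOL-Analysis.Analysis"
begin

text \<open>A configuration K' = (k'_1,...,k'_6) is represented as a function
  K :: nat => real^2; only the values K 1, ..., K 6 are relevant.
  The coordinates of k'_i are c_i = K i $ 1 and d_i = K i $ 2.\<close>

type_synonym config = "nat \<Rightarrow> real^2"

definition det2 :: "real^2 \<Rightarrow> real^2 \<Rightarrow> real" where
  "det2 u w = u$1 * w$2 - u$2 * w$1"

definition Vmat :: "config \<Rightarrow> real^3^3" where
  "Vmat K = (let w1 = K 4 - K 1; w2 = K 5 - K 2; w3 = K 6 - K 3 in
     vector [vector [w1$1, w2$1, w3$1],
             vector [w1$2, w2$2, w3$2],
             vector [det2 (K 1) w1, det2 (K 2) w2, det2 (K 3) w3]])"

definition Vpoly :: "config \<Rightarrow> real" where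
  "Vpoly K = det (Vmat K)"

definition partial_vanishes :: "config \<Rightarrow> nat \<Rightarrow> 2 \<Rightarrow> bool" where
  "partial_vanishes K i j =
     ((\<lambda>t. Vpoly (K(i := K i + t *\<^sub>R axis j 1))) has_real_derivative 0) (at 0)"

definition singular_point :: "config \<Rightarrow> bool" where
  "singular_point K \<longleftrightarrow> Vpoly K = 0 \<and>
     (\<forall>i\<in>{1..6}. \<forall>j. partial_vanishes K i j)"

definition regular_point :: "config \<Rightarrow> bool" where
  "regular_point K \<longleftrightarrow> Vpoly K = 0 \<and> \<not> singular_point K"

end

theory Submission
  imports Defs
begin
lemma cmp: "((A::real^2^2) *v (x::real^2)) $ 1 = A$1$1 * x$1 + A$1$2 * x$2"
           "((A::real^2^2) *v (x::real^2)) $ 2 = A$2$1 * x$1 + A$2$2 * x$2"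
  by (simp_all add: matrix_vector_mult_def sum_2)

lemma Vaff: "Vpoly (\<lambda>k. (A::real^2^2) *v K k + a) = (det A)^2 * Vpoly K"
  unfolding Vpoly_def Vmat_def Let_def det_3 det_2 det2_def
  apply (simp add: cmp)
  by algebra

definition D :: "config \<Rightarrow> nat \<Rightarrow> real^2 \<Rightarrow> real" where
  "D K i v = Vpoly (K(i := K i + v)) - Vpoly (K(i := K i - v))"
definition S :: "config \<Rightarrow> nat \<Rightarrow> real^2 \<Rightarrow> real" where
  "S K i v = Vpoly (K(i := K i + v)) + Vpoly (K(i := K i - v)) - 2 * Vpoly K"

lemma quad1: "2 * Vpoly (K(1 := K 1 + t *\<^sub>R v)) = 2 * Vpoly K + t * D K 1 v + t^2 * S K 1 v"
  unfolding D_def S_def Vpoly_def Vmat_def Let_def det_3 det2_def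
  apply simp
  by algebra

lemma lin1: "D K 1 v = v$1 * D K 1 (axis 1 1) + v$2 * D K 1 (axis 2 1)"
  unfolding D_def Vpoly_def Vmat_def Let_def det_3 det2_def
  apply (simp add: axis_def)
  by algebra

lemma quad2: "2 * Vpoly (K(2 := K 2 + t *\<^sub>R v)) = 2 * Vpoly K + t * D K 2 v + t^2 * S K 2 v"
  unfolding D_def S_def Vpoly_def Vmat_def Let_def det_3 det2_def
  apply simp
  by algebra

lemma lin2: "D K 2 v = v$1 * D K 2 (axis 1 1) + v$2 * D K 2 (axis 2 1)"
  unfolding D_def Vpoly_def Vmat_def Let_def det_3 det2_def
  apply (simp add: axis_def)
  by algebra

lemma quad3: "2 * Vpoly (K(3 := K 3 + t *\<^sub>R v)) = 2 * Vpoly K + t * D K 3 v + t^2 * S K 3 v"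
  unfolding D_def S_def Vpoly_def Vmat_def Let_def det_3 det2_def
  apply simp
  by algebra

lemma lin3: "D K 3 v = v$1 * D K 3 (axis 1 1) + v$2 * D K 3 (axis 2 1)"
  unfolding D_def Vpoly_def Vmat_def Let_def det_3 det2_def
  apply (simp add: axis_def)
  by algebra

lemma quad4: "2 * Vpoly (K(4 := K 4 + t *\<^sub>R v)) = 2 * Vpoly K + t * D K 4 v + t^2 * S K 4 v"
  unfolding D_def S_def Vpoly_def Vmat_def Let_def det_3 det2_def
  apply simp
  by algebra

lemma lin4: "D K 4 v = v$1 * D K 4 (axis 1 1) + v$2 * D K 4 (axis 2 1)"
  unfolding D_def Vpoly_def Vmat_def Let_def det_3 det2_def
  apply (simp add: axis_def)
  by algebra

lemma quad5: "2 * Vpoly (K(5 := K 5 + t *\<^sub>R v)) = 2 * Vpoly K + t * D K 5 v + t^2 * S K 5 v"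
  unfolding D_def S_def Vpoly_def Vmat_def Let_def det_3 det2_def
  apply simp
  by algebra

lemma lin5: "D K 5 v = v$1 * D K 5 (axis 1 1) + v$2 * D K 5 (axis 2 1)"
  unfolding D_def Vpoly_def Vmat_def Let_def det_3 det2_def
  apply (simp add: axis_def)
  by algebra

lemma quad6: "2 * Vpoly (K(6 := K 6 + t *\<^sub>R v)) = 2 * Vpoly K + t * D K 6 v + t^2 * S K 6 v"
  unfolding D_def S_def Vpoly_def Vmat_def Let_def det_3 det2_def
  apply simp
  by algebra

lemma lin6: "D K 6 v = v$1 * D K 6 (axis 1 1) + v$2 * D K 6 (axis 2 1)"
  unfolding D_def Vpoly_def Vmat_def Let_def det_3 det2_def
  apply (simp add: axis_def)
  by algebra


lemma quad: assumes "i \<in> {1..6}"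
  shows "2 * Vpoly (K(i := K i + t *\<^sub>R v)) = 2 * Vpoly K + t * D K i v + t^2 * S K i v"
proof -
  have "i = 1 \<or> i = 2 \<or> i = 3 \<or> i = 4 \<or> i = 5 \<or> i = 6" using assms by auto
  then show ?thesis
  proof (elim disjE)
    assume "i = 1" then show ?thesis using quad1[of K t v] by simp
  next
    assume "i = 2" then show ?thesis using quad2[of K t v] by simp
  next
    assume "i = 3" then show ?thesis using quad3[of K t v] by simp
  next
    assume "i = 4" then show ?thesis using quad4[of K t v] by simp
  next
    assume "i = 5" then show ?thesis using quad5[of K t v] by simp
  next
    assume "i = 6" then show ?thesis using quad6[of K t v] by simp
  qed
qed

lemma lin: assumes "i \<in> {1..6}"
  shows "D K i v = v$1 * D K i (axis 1 1) + v$2 * D K i (axis 2 1)"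
proof -
  have "i = 1 \<or> i = 2 \<or> i = 3 \<or> i = 4 \<or> i = 5 \<or> i = 6" using assms by auto
  then show ?thesis
  proof (elim disjE)
    assume "i = 1" then show ?thesis using lin1[of K v] by simp
  next
    assume "i = 2" then show ?thesis using lin2[of K v] by simp
  next
    assume "i = 3" then show ?thesis using lin3[of K v] by simp
  next
    assume "i = 4" then show ?thesis using lin4[of K v] by simp
  next
    assume "i = 5" then show ?thesis using lin5[of K v] by simp
  next
    assume "i = 6" then show ?thesis using lin6[of K v] by simp
  qed
qed

lemma deriv: assumes "i \<in> {1..6}"
  shows "((\<lambda>t. Vpoly (K(i := K i + t *\<^sub>R v))) has_real_derivative (D K i v / 2)) (at 0)"
proof -
  have e: "(\<lambda>t. Vpoly (K(i := K i + t *\<^sub>R v))) = (\<lambda>t. Vpoly K + t * (D K i v / 2) + t^2 * (S K i v / 2))"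
  proof
    fix t show "Vpoly (K(i := K i + t *\<^sub>R v)) = Vpoly K + t * (D K i v / 2) + t^2 * (S K i v / 2)"
      using quad[OF assms, of K t v] by (simp add: field_simps)
  qed
  have "((\<lambda>t. Vpoly K + t * (D K i v / 2) + t^2 * (S K i v / 2)) has_real_derivative
        (D K i v / 2)) (at 0)"
    by (auto intro!: derivative_eq_intros)
  then show ?thesis unfolding e by simp
qed

lemma pv_iff: assumes "i \<in> {1..6}"
  shows "partial_vanishes K i j \<longleftrightarrow> D K i (axis j 1) = 0"
  unfolding partial_vanishes_def
  using deriv[OF assms, of K "axis j 1"] DERIV_unique by fastforce

lemma dir: assumes "i \<in> {1..6}" "\<forall>j. partial_vanishes K i j"
  shows "D K i v = 0"
  using lin[OF assms(1), of K v] assms pv_iff by simp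

lemma Dtrans: "D (\<lambda>k. (A::real^2^2) *v K k + a) i (A *v w) = (det A)^2 * D K i w"
proof -
  have 1: "(\<lambda>k. A *v K k + a)(i := A *v K i + a + A *v w) = (\<lambda>k. A *v (K(i := K i + w)) k + a)"
    by (rule ext) (simp add: matrix_vector_right_distrib)
  have 2: "(\<lambda>k. A *v K k + a)(i := A *v K i + a - A *v w) = (\<lambda>k. A *v (K(i := K i - w)) k + a)"
    by (rule ext) (simp add: matrix_vector_mult_diff_distrib)
  have "D (\<lambda>k. A *v K k + a) i (A *v w) = Vpoly (\<lambda>k. A *v (K(i := K i + w)) k + a) - Vpoly (\<lambda>k. A *v (K(i := K i - w)) k + a)"
    unfolding D_def by (simp only: 1 2)
  also have "\<dots> = (det A)^2 * D K i w" by (simp only: Vaff D_def right_diff_distrib)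
  finally show ?thesis .
qed

lemma sing_aux:
  fixes A :: "real^2^2"
  assumes "invertible A" "singular_point K"
  shows "singular_point (\<lambda>k. A *v K k + a)"
proof -
  obtain B where AB: "A ** B = mat 1" using assms(1) unfolding invertible_def by blast
  have "Vpoly (\<lambda>k. A *v K k + a) = 0" using assms(2) Vaff unfolding singular_point_def by simp
  moreover have "partial_vanishes (\<lambda>k. A *v K k + a) i j" if i: "i \<in> {1..6}" for i j
  proof -
    have "A *v (B *v axis j 1) = axis j 1" by (simp add: matrix_vector_mul_assoc AB)
    then have "D (\<lambda>k. A *v K k + a) i (axis j 1) = (det A)^2 * D K i (B *v axis j 1)"
      using Dtrans[of A K a i "B *v axis j 1"] by simp
    also have "\<dots> = 0" using dir[OF i] assms(2) i unfolding singular_point_def by simp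
    finally show ?thesis using pv_iff[OF i] by simp
  qed
  ultimately show ?thesis unfolding singular_point_def by blast
qed

theorem lemma3:
  fixes A :: "real^2^2" and a :: "real^2" and K :: config
  assumes "invertible A"
  shows "(singular_point K \<longrightarrow> singular_point (\<lambda>i. A *v K i + a)) \<and>
         (regular_point K \<longrightarrow> regular_point (\<lambda>i. A *v K i + a))"
proof -
  obtain B where AB: "A ** B = mat 1" "B ** A = mat 1" using assms unfolding invertible_def by blast
  have iB: "invertible B" unfolding invertible_def using AB by blast
  have hback: "(\<lambda>k. B *v (A *v K k + a) + (- (B *v a))) = K"
    by (rule ext) (simp add: matrix_vector_right_distrib matrix_vector_mul_assoc AB)
  have dA: "det A \<noteq> 0" using assms invertible_det_nz by blast
  show ?thesis
  proof (intro conjI impI)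
    assume "singular_point K" then show "singular_point (\<lambda>i. A *v K i + a)"
      using sing_aux[OF assms] by blast
  next
    assume r: "regular_point K"
    have "Vpoly (\<lambda>i. A *v K i + a) = 0" using r Vaff unfolding regular_point_def by simp
    moreover have "\<not> singular_point (\<lambda>i. A *v K i + a)"
    proof
      assume "singular_point (\<lambda>i. A *v K i + a)"
      from sing_aux[OF iB this, of "- (B *v a)"] have "singular_point K" by (simp only: hback)
      then show False using r unfolding regular_point_def by blast
    qed
    ultimately show "regular_point (\<lambda>i. A *v K i + a)" unfolding regular_point_def by blast
  qed
qed

end
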